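(* Let $a,b>0$, $\delta>0$, $\theta\in[0,1]$, $\mathcal{X}=\{x\in\mathbb{R}^d:\|x\|_\infty\le b\}$, and for $i\in[d]$, $x\in\mathcal{X}$ let $f_i^+(x)=\theta b|x(i)+b|+\frac{1-\theta}4(x(i)+b)^2$ and $f_i^-(x)=\theta b|x(i)-b|+\frac{1-\theta}4(x(i)-b)^2$. For $v\in\{-1,1\}^d$ let \[ g_v(x)=a\sum_{i=1}^d\Big(\frac{1+2\delta v(i)}2f_i^+(x)+\frac{1-2\delta v(i)}2f_i^-(x)\Big), \] and $\mathcal{G}_{\mathtt{sc}}=\{g_v:v\in\{-1,1\}^d\}$, decomposed coordinatewise as $g_v(x)=\sum_ig_{i,v(i)}(x(i))$ with, for $\nu\in\{-1,1\}$ and $y\in\mathcal{X}_i=[-b,b]$, $g_{i,\nu}(y)=a\big(\frac{1+2\delta\nu}2(\theta b|y+b|+\frac{1-\theta}4(y+b)^2)+\frac{1-2\delta\nu}2(\theta b|y-b|+\frac{1-\theta}4(y-b)^2)\big)$. If $\frac{1-\theta}{1+\theta}\ge2\delta$, then \[ \psi(\mathcal{G}_{\mathtt{sc}})\ \ge\ \frac{2ab^2\delta^2}{1-\theta}. \]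
   Context: For such a decomposable family, $\psi_i(\mathcal{G})=\min_{y\in\mathcal{X}_i}\big(g_{i,1}(y)+g_{i,-1}(y)-(\min_{y'\in\mathcal{X}_i}g_{i,1}(y')+\min_{y'\in\mathcal{X}_i}g_{i,-1}(y'))\big)$ and $\psi(\mathcal{G})=\min_{i\in[d]}\psi_i(\mathcal{G})$. *)

theory Defs
  imports "HOL-Analysis.Analysis"
begin

text \<open>For coordinate i, g i nu y is g_{i,nu}(y) (nu in {-1,1}) and X i is the
  coordinate domain X_i.  Minima over X_i are written as infima (for the
  continuous functions on compact intervals used below they are attained).\<close>

definition psi_coord :: "(real \<Rightarrow> real \<Rightarrow> real) \<Rightarrow> real set \<Rightarrow> real" where
  "psi_coord g X =
     Inf ((\<lambda>y. g 1 y + g (-1) y - (Inf (g 1 ` X) + Inf (g (-1) ` X))) ` X)"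

definition psi :: "nat \<Rightarrow> (nat \<Rightarrow> real \<Rightarrow> real \<Rightarrow> real) \<Rightarrow> (nat \<Rightarrow> real set) \<Rightarrow> real" where
  "psi d g X = Min ((\<lambda>i. psi_coord (g i) (X i)) ` {1..d})"

definition g_sc :: "real \<Rightarrow> real \<Rightarrow> real \<Rightarrow> real \<Rightarrow> nat \<Rightarrow> real \<Rightarrow> real \<Rightarrow> real" where
  "g_sc a b \<delta> \<theta> i \<nu> y =
     a * ((1 + 2 * \<delta> * \<nu>) / 2 * (\<theta> * b * \<bar>y + b\<bar> + (1 - \<theta>) / 4 * (y + b)^2)
        + (1 - 2 * \<delta> * \<nu>) / 2 * (\<theta> * b * \<bar>y - b\<bar> + (1 - \<theta>) / 4 * (y - b)^2))"

end

theory Submission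
  imports Defs
begin

lemma g_form:
  assumes "b > 0" "y \<in> {-b..b}"
  shows "g_sc a b \<delta> \<theta> i \<nu> y = a * (\<theta>*b^2 + (1-\<theta>)/4*b^2 + (1-\<theta>)/4*y^2 + \<delta>*\<nu>*b*y*(1+\<theta>))"
proof -
  have "\<bar>y + b\<bar> = y + b" "\<bar>y - b\<bar> = b - y" using assms by auto
  then show ?thesis unfolding g_sc_def by (simp add: power2_eq_square field_simps)
qed

theorem lemma5:
  fixes a b \<delta> \<theta> :: real and d :: nat
  assumes "a > 0" and "b > 0" and "\<delta> > 0"
    and "0 \<le> \<theta>" and "\<theta> \<le> 1"
    and "d \<ge> 1"
    and "(1 - \<theta>) / (1 + \<theta>) \<ge> 2 * \<delta>"
  shows "psi d (g_sc a b \<delta> \<theta>) (\<lambda>i. {-b..b}) \<ge> 2 * a * b^2 * \<delta>^2 / (1 - \<theta>)"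
proof -
  have th1: "\<theta> < 1"
  proof (rule ccontr)
    assume "\<not> \<theta> < 1" then have "\<theta> = 1" using assms by auto
    then show False using assms by simp
  qed
  have le: "2*\<delta>*(1+\<theta>) \<le> 1 - \<theta>" using assms(7) assms(4) by (simp add: field_simps)
  define m where "m = a*(\<theta>*b^2 + (1-\<theta>)/4*b^2) - a*\<delta>^2*b^2*(1+\<theta>)^2/(1-\<theta>)"
  define ys where "ys = (\<lambda>\<nu>::real. -2*\<delta>*\<nu>*b*(1+\<theta>)/(1-\<theta>))"
  have low: "g_sc a b \<delta> \<theta> i \<nu> y \<ge> m" if "y \<in> {-b..b}" "\<nu>^2 = 1" for i \<nu> y
  proof -
    have sq: "(1-\<theta>)/4 * (y + 2*\<delta>*\<nu>*b*(1+\<theta>)/(1-\<theta>))^2 = (1-\<theta>)/4*y^2 + \<delta>*\<nu>*b*y*(1+\<theta>) + \<delta>^2*\<nu>^2*b^2*(1+\<theta>)^2/(1-\<theta>)"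
      using th1 by (simp add: power2_eq_square divide_simps) (simp add: algebra_simps)
    have "0 \<le> (1-\<theta>)/4 * (y + 2*\<delta>*\<nu>*b*(1+\<theta>)/(1-\<theta>))^2" using th1 by simp
    then have "a * 0 \<le> a * ((1-\<theta>)/4*y^2 + \<delta>*\<nu>*b*y*(1+\<theta>) + \<delta>^2*b^2*(1+\<theta>)^2/(1-\<theta>))"
    proof -
      have "(1-\<theta>)/4*y^2 + \<delta>*\<nu>*b*y*(1+\<theta>) + \<delta>^2*b^2*(1+\<theta>)^2/(1-\<theta>) = (1-\<theta>)/4 * (y + 2*\<delta>*\<nu>*b*(1+\<theta>)/(1-\<theta>))^2"
      proof -
        have "\<delta>^2*\<nu>^2*b^2*(1+\<theta>)^2/(1-\<theta>) = \<delta>^2*b^2*(1+\<theta>)^2/(1-\<theta>)" using that(2) by simp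
        then show ?thesis using sq by linarith
      qed
      then have "0 \<le> (1-\<theta>)/4*y^2 + \<delta>*\<nu>*b*y*(1+\<theta>) + \<delta>^2*b^2*(1+\<theta>)^2/(1-\<theta>)"
        using \<open>0 \<le> (1-\<theta>)/4 * (y + 2*\<delta>*\<nu>*b*(1+\<theta>)/(1-\<theta>))^2\<close> by (simp only:)
      then show ?thesis using assms(1) by simp
    qed
    moreover have "g_sc a b \<delta> \<theta> i \<nu> y - m = a * ((1-\<theta>)/4*y^2 + \<delta>*\<nu>*b*y*(1+\<theta>) + \<delta>^2*b^2*(1+\<theta>)^2/(1-\<theta>))"
      unfolding g_form[OF assms(2) that(1)] m_def by (simp add: ring_distribs)
    ultimately show ?thesis by linarith
  qed
  have ysin: "ys \<nu> \<in> {-b..b}" if "\<nu> = 1 \<or> \<nu> = -1" for \<nu>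
  proof -
    have "2*\<delta>*(1+\<theta>)/(1-\<theta>) \<le> 1" using le th1 by simp
    then have "2*\<delta>*(1+\<theta>)/(1-\<theta>) * b \<le> b" using assms(2) using mult_right_mono[of _ 1 b] by fastforce
    moreover have "0 \<le> 2*\<delta>*(1+\<theta>)/(1-\<theta>) * b" using assms th1 by simp
    moreover have "ys 1 = - (2*\<delta>*(1+\<theta>)/(1-\<theta>) * b)" "ys (-1) = 2*\<delta>*(1+\<theta>)/(1-\<theta>) * b"
      unfolding ys_def by simp_all
    ultimately show ?thesis using that by auto
  qed
  have att: "g_sc a b \<delta> \<theta> i \<nu> (ys \<nu>) = m" if "\<nu> = 1 \<or> \<nu> = -1" for i \<nu>
  proof -
    have "g_sc a b \<delta> \<theta> i \<nu> (ys \<nu>) = a * (\<theta>*b^2 + (1-\<theta>)/4*b^2 + (1-\<theta>)/4*(-2*\<delta>*\<nu>*b*(1+\<theta>)/(1-\<theta>))^2 + \<delta>*\<nu>*b*(-2*\<delta>*\<nu>*b*(1+\<theta>)/(1-\<theta>))*(1+\<theta>))"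
      using g_form[OF assms(2) ysin[OF that]] unfolding ys_def by simp
    also have "\<dots> = m" unfolding m_def using th1 that
      by (auto simp add: power2_eq_square divide_simps) (simp_all add: algebra_simps)
    finally show ?thesis .
  qed
  have infle: "Inf (g_sc a b \<delta> \<theta> i \<nu> ` {-b..b}) \<le> m" if "\<nu> = 1 \<or> \<nu> = -1" for i \<nu>
  proof -
    have "\<nu>^2 = 1" using that by auto
    then have "bdd_below (g_sc a b \<delta> \<theta> i \<nu> ` {-b..b})" using low by (intro bdd_belowI2) auto
    then have "Inf (g_sc a b \<delta> \<theta> i \<nu> ` {-b..b}) \<le> g_sc a b \<delta> \<theta> i \<nu> (ys \<nu>)"
      using ysin[OF that] by (intro cInf_lower) auto
    then show ?thesis using att[OF that] by simp
  qed
  have coord: "psi_coord (g_sc a b \<delta> \<theta> i) {-b..b} \<ge> 2 * a * b^2 * \<delta>^2 / (1 - \<theta>)" for i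
    unfolding psi_coord_def
  proof (rule cINF_greatest)
    show "{-b..b} \<noteq> {}" using assms(2) by simp
    fix y assume y: "y \<in> {-b..b}"
    have I1: "Inf (g_sc a b \<delta> \<theta> i 1 ` {-b..b}) \<le> m" by (rule infle) simp
    have I2: "Inf (g_sc a b \<delta> \<theta> i (-1) ` {-b..b}) \<le> m" by (rule infle) simp
    have e: "g_sc a b \<delta> \<theta> i 1 y + g_sc a b \<delta> \<theta> i (-1) y - 2*m
       = 2*a*(1-\<theta>)/4*y^2 + 2*a*\<delta>^2*b^2*(1+\<theta>)^2/(1-\<theta>)"
      unfolding g_form[OF assms(2) y] m_def by (simp add: algebra_simps) (simp add: field_simps)
    have "0 \<le> 2*a*(1-\<theta>)/4*y^2" using assms th1 by simp
    moreover have "2*a*b^2*\<delta>^2/(1-\<theta>) \<le> 2*a*\<delta>^2*b^2*(1+\<theta>)^2/(1-\<theta>)"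
    proof -
      have "1 \<le> (1+\<theta>)^2" using assms(4) by (intro one_le_power) simp
      then have "2*a*b^2*\<delta>^2 * 1 \<le> 2*a*b^2*\<delta>^2 * (1+\<theta>)^2" using assms by (intro mult_left_mono) auto
      then show ?thesis using th1 by (intro divide_right_mono) (auto simp: algebra_simps)
    qed
    ultimately show "2 * a * b^2 * \<delta>^2 / (1 - \<theta>) \<le> g_sc a b \<delta> \<theta> i 1 y + g_sc a b \<delta> \<theta> i (-1) y
        - (Inf (g_sc a b \<delta> \<theta> i 1 ` {-b..b}) + Inf (g_sc a b \<delta> \<theta> i (-1) ` {-b..b}))"
      using e I1 I2 by linarith
  qed
  show ?thesis unfolding psi_def
    using coord assms(6) by (subst Min_ge_iff) auto
qed

end
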